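(* For every $n\ge 1$, the group $\mathrm{PSL}_2(\mathbb{F}_{2^n})$ is mixable.
   Context: A finite group $G$ is mixable if there exist fixed elements $g_1,\dots,g_k\in G$ and independent Bernoulli random variables $\epsilon_i\sim\mathrm{Ber}(p_i)$, $p_i\in[0,1]$, such that the random product $g_1^{\epsilon_1}\cdots g_k^{\epsilon_k}$ is distributed exactly uniformly on $G$. *)

theory Defs
  imports "HOL-Analysis.Determinants" "HOL-Algebra.Coset"
begin

text \<open>Ordered product g_1^{e_1} ... g_k^{e_k} in a group G, for a list of elements
  and a list of exponents in {0,1} (encoded as booleans).\<close>
definition sel_prod :: "('g, 'b) monoid_scheme \<Rightarrow> 'g list \<Rightarrow> bool list \<Rightarrow> 'g" where
  "sel_prod G gs es = foldr (\<lambda>(g, e) acc. (if e then g else \<one>\<^bsub>G\<^esub>) \<otimes>\<^bsub>G\<^esub> acc) (zip gs es) \<one>\<^bsub>G\<^esub>"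

text \<open>Probability of an outcome vector es under independent Bernoulli(p_i) variables.\<close>
definition bern_weight :: "real list \<Rightarrow> bool list \<Rightarrow> real" where
  "bern_weight ps es = (\<Prod>i<length ps. if es ! i then ps ! i else 1 - ps ! i)"

definition mixable :: "('g, 'b) monoid_scheme \<Rightarrow> bool" where
  "mixable G \<longleftrightarrow> (\<exists>gs ps. length ps = length gs \<and> set gs \<subseteq> carrier G
      \<and> (\<forall>p\<in>set ps. 0 \<le> p \<and> p \<le> 1)
      \<and> (\<forall>h\<in>carrier G.
           (\<Sum>es\<in>{es. length es = length gs \<and> sel_prod G gs es = h}. bern_weight ps es)
             = 1 / real (card (carrier G))))"

text \<open>SL_2(F) as a group of 2x2 matrices over the field 'a.\<close>
definition SL2 :: "(('a::field)^2^2) monoid" where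
  "SL2 = \<lparr>carrier = {A. det A = 1}, monoid.mult = (**), one = mat 1\<rparr>"

text \<open>PSL_2(F) = SL_2(F) / {I, -I}.\<close>
definition PSL2 :: "(('a::field)^2^2) set monoid" where
  "PSL2 = SL2 Mod {mat 1, - mat 1}"

end

theory Submission
  imports Defs "HOL-Algebra.Multiplicative_Group"
begin

(* ---- from P1.thy ---- *)
lemma card_times_zero: "of_nat CARD('a::{field,finite}) = (0::'a)"
proof -
  have "(\<Sum>y\<in>(UNIV::'a set). y + 1) = (\<Sum>y\<in>UNIV. y)"
    by (rule sum.reindex_bij_witness[of _ "\<lambda>y. y - 1" "\<lambda>y. y + 1"]) auto
  then show ?thesis by (simp add: sum.distrib)
qed

lemma char2:
  assumes "CARD('a::{field,finite}) = 2 ^ n"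
  shows "(1::'a) + 1 = 0"
proof -
  have "(of_nat (2^n) :: 'a) = 0" using card_times_zero[where 'a='a] assms by simp
  then have "((1::'a) + 1) ^ n = 0" by simp
  then show ?thesis by simp
qed

lemma c2_neg: assumes "(1::'a::field) + 1 = 0" shows "- (x::'a) = x"
proof -
  have "x + x = (1 + 1) * x" by (simp add: algebra_simps)
  then have "x + x = 0" using assms by simp
  then show ?thesis by (simp add: add_eq_0_iff2 eq_neg_iff_add_eq_0)
qed

lemma c2_add_self: assumes "(1::'a::field) + 1 = 0" shows "(x::'a) + x = 0"
  using c2_neg[OF assms, of x] by (metis add.right_inverse diff_conv_add_uminus diff_self)

definition mk :: "'a::field \<Rightarrow> 'a \<Rightarrow> 'a \<Rightarrow> 'a \<Rightarrow> 'a^2^2" where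
  "mk a b c d = vector [vector [a, b], vector [c, d]]"

lemma mk_nth[simp]: "mk a b c d $ 1 $ 1 = a" "mk a b c d $ 1 $ 2 = b"
  "mk a b c d $ 2 $ 1 = c" "mk a b c d $ 2 $ 2 = d"
  by (simp_all add: mk_def)

lemma mat2_eq_iff: "(A::'a^2^2) = B \<longleftrightarrow>
   A$1$1 = B$1$1 \<and> A$1$2 = B$1$2 \<and> A$2$1 = B$2$1 \<and> A$2$2 = B$2$2"
  by (auto simp: vec_eq_iff forall_2)

lemma mult2_nth[simp]:
  "((A::'a::field^2^2) ** B) $ 1 $ 1 = A$1$1*B$1$1 + A$1$2*B$2$1"
  "(A ** B) $ 1 $ 2 = A$1$1*B$1$2 + A$1$2*B$2$2"
  "(A ** B) $ 2 $ 1 = A$2$1*B$1$1 + A$2$2*B$2$1"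
  "(A ** B) $ 2 $ 2 = A$2$1*B$1$2 + A$2$2*B$2$2"
  by (simp_all add: matrix_matrix_mult_def sum_2)

lemma mat1_nth[simp]:
  "(mat 1 :: 'a::field^2^2) $ 1 $ 1 = 1" "(mat 1 :: 'a::field^2^2) $ 1 $ 2 = 0"
  "(mat 1 :: 'a::field^2^2) $ 2 $ 1 = 0" "(mat 1 :: 'a::field^2^2) $ 2 $ 2 = 1"
  by (simp_all add: mat_def)

lemma mat1_mk: "(mat 1 :: 'a::field^2^2) = mk 1 0 0 1"
  by (simp add: mat2_eq_iff)

lemma det_mk: "det (mk a b c d) = a * d - b * (c::'a::field)"
  by (simp add: det_2)

definition act :: "'a::field^2^2 \<Rightarrow> 'a \<times> 'a \<Rightarrow> 'a \<times> 'a" where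
  "act A v = (A$1$1 * fst v + A$1$2 * snd v, A$2$1 * fst v + A$2$2 * snd v)"

lemma act_mult: "act (A ** B) v = act A (act B v)"
  by (simp add: act_def algebra_simps)

lemma act_one[simp]: "act (mat 1) v = v"
  by (simp add: act_def)

definition minv :: "'a::field^2^2 \<Rightarrow> 'a^2^2" where
  "minv A = mk (A$2$2) (- A$1$2) (- A$2$1) (A$1$1)"

lemma minv_left: "det A = 1 \<Longrightarrow> minv A ** A = mat 1"
  by (simp add: mat2_eq_iff minv_def det_2 algebra_simps)

lemma minv_right: "det A = 1 \<Longrightarrow> A ** minv A = mat 1"
  by (simp add: mat2_eq_iff minv_def det_2 algebra_simps)

lemma det_minv[simp]: "det (minv A) = det A"
  by (simp add: minv_def det_2 algebra_simps)

lemma minv_prod: "minv (A ** B) = minv B ** minv A"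
  by (simp add: mat2_eq_iff minv_def algebra_simps)

lemma minv_one[simp]: "minv (mat 1 :: 'a::field^2^2) = mat 1"
  by (simp add: mat2_eq_iff minv_def)

lemma mult_assoc2: "(A::'a::field^2^2) ** B ** C = A ** (B ** C)"
  by (simp add: matrix_mul_assoc)

lemma det_mult2: "det ((A::'a::field^2^2) ** B) = det A * det B"
  by (simp add: det_mul)

lemma act_minv: "det A = 1 \<Longrightarrow> act (minv A) (act A v) = v"
  by (metis act_mult act_one minv_left)

lemma act_minv': "det A = 1 \<Longrightarrow> act A (act (minv A) v) = v"
  by (metis act_mult act_one minv_right)

(* ---- from P2.thy ---- *)
definition stp :: "('a::field^2^2) \<Rightarrow> real \<Rightarrow> (('a^2^2) \<Rightarrow> real) \<Rightarrow> ('a^2^2 \<Rightarrow> real)" where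
  "stp g p D C = (1-p) * D C + p * D (minv g ** C)"

fun opsl :: "(('a::field^2^2) \<times> real) list \<Rightarrow> (('a^2^2) \<Rightarrow> real) \<Rightarrow> ('a^2^2 \<Rightarrow> real)" where
  "opsl [] D = D"
| "opsl ((g,p)#L) D = stp g p (opsl L D)"

lemma opsl_append: "opsl (L1 @ L2) D = opsl L1 (opsl L2 D)"
  by (induct L1 D rule: opsl.induct) auto

definition delta1 :: "('a::field^2^2) \<Rightarrow> real" where
  "delta1 C = (if C = mat 1 then 1 else 0)"

definition pdist :: "(('a::field^2^2) \<times> real) list \<Rightarrow> ('a^2^2 \<Rightarrow> real)" where
  "pdist L = opsl L delta1"

definition rp :: "('a::field^2^2) list \<Rightarrow> bool list \<Rightarrow> 'a^2^2" where
  "rp Ms es = foldr (\<lambda>(g,e) acc. (if e then g else mat 1) ** acc) (zip Ms es) (mat 1)"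

lemma rp_Nil[simp]: "rp [] es = mat 1" by (simp add: rp_def)
lemma rp_Cons[simp]: "rp (A#Ms) (e#es) = (if e then A else mat 1) ** rp Ms es"
  by (simp add: rp_def)

lemma bw_Cons: "bern_weight (p#ps) (e#es) = (if e then p else 1-p) * bern_weight ps es"
  unfolding bern_weight_def by (subst length_Cons, subst prod.lessThan_Suc_shift) (auto intro!: prod.cong)

lemma sum_len_Suc:
  "(\<Sum>es\<in>{es. length es = Suc n}. f es) =
     (\<Sum>es\<in>{es. length es = n}. f (True#es)) + (\<Sum>es\<in>{es. length es = n}. f (False#es))"
proof -
  have eq: "{es. length es = Suc n} = (\<lambda>(e,es). e#es) ` (UNIV \<times> {es. length es = n})"
  proof
    show "{es. length es = Suc n} \<subseteq> (\<lambda>(e,es). e#es) ` (UNIV \<times> {es. length es = n})"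
    proof
      fix es assume "es \<in> {es. length es = Suc n}"
      then obtain e es' where "es = e#es'" "length es' = n" by (cases es) auto
      then show "es \<in> (\<lambda>(e,es). e#es) ` (UNIV \<times> {es. length es = n})" by force
    qed
  qed auto
  have inj: "inj_on (\<lambda>(e,es). e#es) (UNIV \<times> {es::bool list. length es = n})"
    by (auto simp: inj_on_def)
  have fin: "finite {es::bool list. length es = n}"
    using finite_lists_length_eq[of "UNIV::bool set" n] by simp
  have "(\<Sum>es\<in>{es. length es = Suc n}. f es) = (\<Sum>x\<in>UNIV \<times> {es. length es = n}. f (fst x # snd x))"
    unfolding eq by (subst sum.reindex[OF inj]) (auto intro!: sum.cong)
  also have "\<dots> = (\<Sum>e\<in>UNIV. \<Sum>es\<in>{es. length es = n}. f (e#es))"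
    using fin by (subst sum.cartesian_product) (auto intro!: sum.cong)
  also have "\<dots> = (\<Sum>es\<in>{es. length es = n}. f (True#es)) + (\<Sum>es\<in>{es. length es = n}. f (False#es))"
    by (simp add: UNIV_bool add.commute)
  finally show ?thesis .
qed

lemma mult_eq_iff_minv: "det A = 1 \<Longrightarrow> (A ** B = C) \<longleftrightarrow> (B = minv A ** C)"
  by (metis minv_left minv_right matrix_mul_assoc matrix_mul_lid)

lemma sum_es_dist:
  assumes "length ps = length Ms" "\<forall>A\<in>set Ms. det A = 1"
  shows "(\<Sum>es\<in>{es. length es = length Ms \<and> rp Ms es = C}. bern_weight ps es) = pdist (zip Ms ps) C"
  using assms
proof (induct Ms arbitrary: ps C)
  case Nil
  then show ?case
    by (cases "C = mat 1") (auto simp: pdist_def delta1_def bern_weight_def)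
next
  case (Cons A Ms)
  obtain p ps' where ps_eq: "ps = p # ps'" "length ps' = length Ms"
    using Cons.prems by (cases ps) auto
  have detA: "det A = 1" using Cons.prems by auto
  have IH: "\<And>C. (\<Sum>es\<in>{es. length es = length Ms \<and> rp Ms es = C}. bern_weight ps' es) = pdist (zip Ms ps') C"
    using Cons ps_eq by auto
  have fin: "\<And>n. finite {es::bool list. length es = n}"
    using finite_lists_length_eq[of "UNIV::bool set"] by simp
  have conv: "\<And>n P. (\<Sum>es\<in>{es. length es = n \<and> P es}. bern_weight ps es)
      = (\<Sum>es\<in>{es. length es = n}. if P es then bern_weight ps es else 0)"
    by (subst sum.inter_filter[symmetric]) (auto simp: fin intro!: sum.cong)
  have conv': "\<And>n P. (\<Sum>es\<in>{es. length es = n \<and> P es}. bern_weight ps' es)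
      = (\<Sum>es\<in>{es. length es = n}. if P es then bern_weight ps' es else 0)"
    by (subst sum.inter_filter[symmetric]) (auto simp: fin intro!: sum.cong)
  have "(\<Sum>es\<in>{es. length es = length (A#Ms) \<and> rp (A#Ms) es = C}. bern_weight ps es)
     = (\<Sum>es\<in>{es. length es = Suc (length Ms)}. if rp (A#Ms) es = C then bern_weight ps es else 0)"
    by (simp add: conv)
  also have "\<dots> = (\<Sum>es\<in>{es. length es = length Ms}. if A ** rp Ms es = C then p * bern_weight ps' es else 0)
      + (\<Sum>es\<in>{es. length es = length Ms}. if rp Ms es = C then (1-p) * bern_weight ps' es else 0)"
    apply (subst sum_len_Suc) apply (unfold ps_eq(1)) apply (simp only: bw_Cons) apply simp done
  also have "(\<Sum>es\<in>{es. length es = length Ms}. if A ** rp Ms es = C then p * bern_weight ps' es else 0)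
      = p * (\<Sum>es\<in>{es. length es = length Ms}. if rp Ms es = minv A ** C then bern_weight ps' es else 0)"
    by (simp add: sum_distrib_left mult_eq_iff_minv[OF detA] if_distrib cong: if_cong)
  also have "(\<Sum>es\<in>{es. length es = length Ms}. if rp Ms es = C then (1-p) * bern_weight ps' es else 0)
      = (1-p) * (\<Sum>es\<in>{es. length es = length Ms}. if rp Ms es = C then bern_weight ps' es else 0)"
    by (simp add: sum_distrib_left if_distrib cong: if_cong)
  finally show ?case
    using IH[of C] IH[of "minv A ** C"] by (simp add: conv' ps_eq pdist_def stp_def)
qed

section \<open>PSL2 in characteristic 2\<close>

lemma neg_mat1: assumes "(1::'a::field) + 1 = 0" shows "- mat 1 = (mat 1 :: 'a^2^2)"
  by (simp add: mat2_eq_iff c2_neg[OF assms])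

lemma carrier_SL2: "carrier (SL2 :: ('a::field^2^2) monoid) = {C. det C = 1}"
  by (simp add: SL2_def)

lemma PSL2_parts:
  assumes "(1::'a::field) + 1 = 0"
  shows "carrier (PSL2::('a^2^2) set monoid) = (\<lambda>C. {C}) ` {C. det C = 1}"
    and "\<And>A B. {A} \<otimes>\<^bsub>(PSL2::('a^2^2) set monoid)\<^esub> {B} = {A ** B}"
    and "\<one>\<^bsub>(PSL2::('a^2^2) set monoid)\<^esub> = {mat 1}"
proof -
  have H: "{mat 1, - mat 1} = {mat 1 :: 'a^2^2}" using neg_mat1[OF assms] by simp
  show "carrier (PSL2::('a^2^2) set monoid) = (\<lambda>C. {C}) ` {C. det C = 1}"
    by (auto simp: PSL2_def FactGroup_def RCOSETS_def r_coset_def H SL2_def)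
  show "\<And>A B. {A} \<otimes>\<^bsub>(PSL2::('a^2^2) set monoid)\<^esub> {B} = {A ** B}"
    by (simp add: PSL2_def FactGroup_def set_mult_def SL2_def)
  show "\<one>\<^bsub>(PSL2::('a^2^2) set monoid)\<^esub> = {mat 1}"
    by (simp add: PSL2_def FactGroup_def H)
qed

lemma sel_prod_PSL2:
  assumes "(1::'a::field) + 1 = 0"
  shows "length es = length Ms \<Longrightarrow>
     sel_prod (PSL2::('a^2^2) set monoid) (map (\<lambda>A. {A}) Ms) es = {rp Ms es}"
proof (induct Ms arbitrary: es)
  case Nil
  then show ?case by (simp add: sel_prod_def PSL2_parts[OF assms])
next
  case (Cons A Ms)
  then obtain e es' where "es = e#es'" "length es' = length Ms" by (cases es) auto
  with Cons show ?case
    by (cases e) (simp_all add: sel_prod_def PSL2_parts[OF assms])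
qed

lemma mixable_from_dist:
  assumes c2: "(1::'a::{field,finite}) + 1 = 0"
    and dets: "\<forall>x\<in>set L. det (fst x) = (1::'a)"
    and probs: "\<forall>x\<in>set L. 0 \<le> snd x \<and> snd x \<le> 1"
    and unif: "\<forall>C::'a^2^2. det C = 1 \<longrightarrow> pdist L C = 1 / real (card {C::'a^2^2. det C = 1})"
  shows "mixable (PSL2 :: ('a^2^2) set monoid)"
proof -
  define Ms where "Ms = map fst L"
  define ps where "ps = map snd L"
  define gs where "gs = map (\<lambda>A. {A}) Ms"
  have zipL: "zip Ms ps = L" by (simp add: Ms_def ps_def zip_map_fst_snd)
  have cardc: "card (carrier (PSL2::('a^2^2) set monoid)) = card {C::'a^2^2. det C = 1}"
    unfolding PSL2_parts(1)[OF c2] by (rule card_image) (auto simp: inj_on_def)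
  show ?thesis
    unfolding mixable_def
  proof (intro exI[of _ gs] exI[of _ ps] conjI ballI)
    show "length ps = length gs" by (simp add: ps_def gs_def Ms_def)
    show "set gs \<subseteq> carrier PSL2"
      using dets by (auto simp: gs_def Ms_def PSL2_parts(1)[OF c2])
    fix p assume "p \<in> set ps" then show "0 \<le> p" "p \<le> 1" using probs by (auto simp: ps_def)
  next
    fix h assume "h \<in> carrier (PSL2::('a^2^2) set monoid)"
    then obtain C where C: "h = {C}" "det C = 1" by (auto simp: PSL2_parts(1)[OF c2])
    have "{es. length es = length gs \<and> sel_prod PSL2 gs es = h} = {es. length es = length Ms \<and> rp Ms es = C}"
      using sel_prod_PSL2[OF c2] by (auto simp: gs_def C)
    then have "(\<Sum>es\<in>{es. length es = length gs \<and> sel_prod PSL2 gs es = h}. bern_weight ps es) = pdist L C"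
      using sum_es_dist[of ps Ms C] dets by (simp add: zipL) (simp add: ps_def Ms_def)
    then show "(\<Sum>es\<in>{es. length es = length gs \<and> sel_prod PSL2 gs es = h}. bern_weight ps es) =
         1 / real (card (carrier (PSL2::('a^2^2) set monoid)))"
      using unif C cardc by simp
  qed
qed

(* ---- from P3.thy ---- *)
definition u :: "'a::field \<Rightarrow> 'a^2^2" where "u c = mk 1 c 0 1"

lemma u_nth[simp]: "u c $ 1 $ 1 = 1" "u c $ 1 $ 2 = c" "u c $ 2 $ 1 = 0" "u c $ 2 $ 2 = 1"
  by (simp_all add: u_def)

lemma u_mult: "u b ** u c = u (b + c)" by (simp add: mat2_eq_iff add.commute)
lemma u0: "u 0 = mat 1" by (simp add: mat2_eq_iff)
lemma det_u[simp]: "det (u c) = 1" by (simp add: det_2)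
lemma minv_u: "(1::'a::field) + 1 = 0 \<Longrightarrow> minv (u (c::'a)) = u c"
  by (simp add: mat2_eq_iff minv_def c2_neg)
lemma u_inj: "u b = u c \<longleftrightarrow> b = c" by (auto simp: mat2_eq_iff)

lemma minv_cancel1: "det g = 1 \<Longrightarrow> g ** (minv g ** a) = a"
  by (simp add: matrix_mul_assoc minv_right)
lemma minv_cancel2: "det g = 1 \<Longrightarrow> minv g ** (g ** a) = a"
  by (simp add: matrix_mul_assoc minv_left)

lemma u_u: "(1::'a::field) + 1 = 0 \<Longrightarrow> u (c::'a) ** (u c ** C) = C"
  by (simp add: matrix_mul_assoc u_mult c2_add_self u0)

lemma u_comm: "u b' ** (u b ** C) = u b ** (u b' ** C)"
  by (simp add: matrix_mul_assoc u_mult add.commute)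

lemma u_shift: "u b ** (u c ** C) = u (b + c) ** C"
  by (simp add: matrix_mul_assoc u_mult)

definition avgL :: "(('a::{field,finite})^2^2 \<Rightarrow> real) \<Rightarrow> 'a^2^2 \<Rightarrow> real" where
  "avgL D C = (\<Sum>c\<in>UNIV. D (u c ** C)) / real CARD('a)"

definition LUof :: "'a::field list \<Rightarrow> (('a^2^2) \<times> real) list" where
  "LUof bs = map (\<lambda>c. (u c, 1/2)) bs"

lemma opsl_LU_Cons:
  assumes "(1::'a::field) + 1 = 0"
  shows "opsl (LUof ((b::'a)#bs)) D C = (opsl (LUof bs) D C + opsl (LUof bs) D (u b ** C)) / 2"
  by (simp add: LUof_def stp_def minv_u[OF assms] field_simps)

lemma opsl_LU_inv:
  assumes c2: "(1::'a::field) + 1 = 0"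
  shows "b \<in> set bs \<Longrightarrow> opsl (LUof (bs::'a list)) D (u b ** C) = opsl (LUof bs) D C"
proof (induct bs arbitrary: C)
  case Nil then show ?case by simp
next
  case (Cons b' bs)
  show ?case
  proof (cases "b = b'")
    case True
    then show ?thesis
      by (simp add: opsl_LU_Cons[OF c2] u_u[OF c2])
  next
    case False
    then have b: "b \<in> set bs" using Cons by auto
    show ?thesis
      using Cons.hyps[OF b, of C] Cons.hyps[OF b, of "u b' ** C"]
      by (simp add: opsl_LU_Cons[OF c2] u_comm[of b' b C])
  qed
qed

lemma opsl_LU_sum:
  assumes c2: "(1::'a::{field,finite}) + 1 = 0"
  shows "(\<Sum>c\<in>UNIV. opsl (LUof (bs::'a list)) D (u c ** C)) = (\<Sum>c\<in>UNIV. D (u c ** C))"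
proof (induct bs arbitrary: D)
  case Nil then show ?case by (simp add: LUof_def)
next
  case (Cons b bs)
  have re: "(\<Sum>c\<in>UNIV. opsl (LUof bs) D (u b ** (u c ** C))) = (\<Sum>c\<in>UNIV. opsl (LUof bs) D (u c ** C))"
    unfolding u_shift
    by (rule sum.reindex_bij_witness[of _ "\<lambda>c. c - b" "\<lambda>c. b + c"]) auto
  have "(\<Sum>c\<in>UNIV. opsl (LUof (b#bs)) D (u c ** C))
     = (\<Sum>c\<in>UNIV. (opsl (LUof bs) D (u c ** C) + opsl (LUof bs) D (u b ** (u c ** C))) / 2)"
    by (simp add: opsl_LU_Cons[OF c2])
  also have "\<dots> = ((\<Sum>c\<in>UNIV. opsl (LUof bs) D (u c ** C)) + (\<Sum>c\<in>UNIV. opsl (LUof bs) D (u b ** (u c ** C)))) / 2"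
    by (simp add: sum_divide_distrib[symmetric] sum.distrib)
  also have "\<dots> = (\<Sum>c\<in>UNIV. D (u c ** C))" using re Cons by simp
  finally show ?case .
qed

lemma opsl_LU:
  assumes c2: "(1::'a::{field,finite}) + 1 = 0" and bs: "set bs = (UNIV::'a set)"
  shows "opsl (LUof bs) D C = avgL D C"
proof -
  have "(\<Sum>c\<in>UNIV. opsl (LUof bs) D (u c ** C)) = (\<Sum>c\<in>(UNIV::'a set). opsl (LUof bs) D C)"
    using opsl_LU_inv[OF c2] bs by auto
  also have "\<dots> = real CARD('a) * opsl (LUof bs) D C" by simp
  finally show ?thesis
    using opsl_LU_sum[OF c2, of bs D C] by (simp add: avgL_def field_simps)
qed

section \<open>Support, mass, right invariance\<close>

definition SLsupp :: "('a::field^2^2 \<Rightarrow> real) \<Rightarrow> bool" where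
  "SLsupp D \<longleftrightarrow> (\<forall>C. D C \<noteq> 0 \<longrightarrow> det C = 1)"

lemma SLsupp_opsl: "SLsupp D \<Longrightarrow> \<forall>x\<in>set L. det (fst x) = 1 \<Longrightarrow> SLsupp (opsl L D)"
proof (induct L D rule: opsl.induct)
  case (2 g p L D)
  then have S: "SLsupp (opsl L D)" and d: "det g = 1" by auto
  show ?case unfolding SLsupp_def
  proof (intro allI impI)
    fix C assume "opsl ((g, p) # L) D C \<noteq> 0"
    then have "opsl L D C \<noteq> 0 \<or> opsl L D (minv g ** C) \<noteq> 0" by (auto simp: stp_def)
    then show "det C = 1"
    proof
      assume "opsl L D (minv g ** C) \<noteq> 0"
      then have "det (minv g ** C) = 1" using S by (simp add: SLsupp_def)
      then show ?thesis using d by (simp add: det_mult2)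
    qed (use S in \<open>simp add: SLsupp_def\<close>)
  qed
qed simp

lemma SLsupp_delta1: "SLsupp delta1" by (simp add: SLsupp_def delta1_def)

lemma sum_reindex_mult:
  assumes "det (g::'a::{field,finite}^2^2) = 1"
  shows "(\<Sum>C\<in>UNIV. f (minv g ** C)) = (\<Sum>C\<in>UNIV. f C)"
  by (rule sum.reindex_bij_witness[of _ "\<lambda>C. g ** C" "\<lambda>C. minv g ** C"])
     (auto simp: minv_cancel1[OF assms] minv_cancel2[OF assms])

lemma mass_opsl:
  "\<forall>x\<in>set L. det (fst x) = 1 \<Longrightarrow> (\<Sum>C\<in>UNIV. opsl L D (C::'a::{field,finite}^2^2)) = (\<Sum>C\<in>UNIV. D C)"
proof (induct L D rule: opsl.induct)
  case (2 g p L D)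
  then have d: "det g = 1" by auto
  have "(\<Sum>C\<in>UNIV. stp g p (opsl L D) C) = (1-p) * (\<Sum>C\<in>UNIV. opsl L D C) + p * (\<Sum>C\<in>UNIV. opsl L D (minv g ** C))"
    by (simp add: stp_def sum.distrib sum_distrib_left)
  also have "\<dots> = (\<Sum>C\<in>UNIV. opsl L D C)" by (simp add: sum_reindex_mult[OF d] algebra_simps)
  finally show ?case using 2 by simp
qed simp

lemma mass_delta1: "(\<Sum>C\<in>UNIV. delta1 (C::'a::{field,finite}^2^2)) = 1"
  by (simp add: delta1_def)

definition rinv :: "('a::field^2^2 \<Rightarrow> real) \<Rightarrow> bool" where
  "rinv D \<longleftrightarrow> (\<forall>C c. D (C ** u c) = D C)"

lemma rinv_opsl: "rinv D \<Longrightarrow> rinv (opsl L D)"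
  by (induct L D rule: opsl.induct) (auto simp: rinv_def stp_def matrix_mul_assoc)

lemma avgL_delta1:
  assumes c2: "(1::'a::{field,finite}) + 1 = 0"
  shows "avgL delta1 (C::'a^2^2) = (if C \<in> range u then 1 / real CARD('a) else 0)"
proof -
  have "\<And>c::'a. (u c ** (C::'a^2^2) = mat 1) \<longleftrightarrow> C = u c"
    using mult_eq_iff_minv[of "u c" C "mat 1" for c] by (simp add: minv_u[OF c2])
  then have "(\<Sum>c\<in>UNIV. delta1 (u c ** C)) = (\<Sum>c\<in>(UNIV::'a set). if C = u c then 1 else 0)"
    by (simp add: delta1_def)
  also have "\<dots> = (if C \<in> range u then 1 else 0)"
  proof (cases "C \<in> range u")
    case True
    then obtain c0 where "C = u c0" by auto
    then have "(\<Sum>c\<in>(UNIV::'a set). if C = u c then (1::real) else 0) = (\<Sum>c\<in>UNIV. if c0 = c then 1 else 0)"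
      by (simp add: u_inj)
    then show ?thesis using True by simp
  qed (force intro!: sum.neutral)
  finally show ?thesis by (simp add: avgL_def)
qed

lemma rinv_avgL_delta1:
  assumes c2: "(1::'a::{field,finite}) + 1 = 0"
  shows "rinv (avgL (delta1::'a^2^2 \<Rightarrow> real))"
proof -
  have "C ** u c \<in> range u \<longleftrightarrow> C \<in> range u" for C :: "'a^2^2" and c
  proof
    assume "C ** u c \<in> range u"
    then obtain d where "C ** u c = u d" by auto
    then have "C ** u c ** u c = u d ** u c" by simp
    then have "C = u (d + c)" by (simp add: matrix_mul_assoc[symmetric] u_mult c2_add_self[OF c2] u0)
    then show "C \<in> range u" by auto
  next
    assume "C \<in> range u"
    then obtain d where "C = u d" by auto
    then show "C ** u c \<in> range u" by (auto simp: u_mult)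
  qed
  then show ?thesis by (simp add: rinv_def avgL_delta1[OF c2])
qed

section \<open>Vector walk\<close>

definition e1 :: "'a::field \<times> 'a" where "e1 = (1, 0)"

definition nu :: "('a::{field,finite}^2^2 \<Rightarrow> real) \<Rightarrow> 'a \<times> 'a \<Rightarrow> real" where
  "nu D v = (\<Sum>C\<in>UNIV. if act C e1 = v then D C else 0)"

definition stepv :: "'a::field^2^2 \<Rightarrow> real \<Rightarrow> ('a \<times> 'a \<Rightarrow> real) \<Rightarrow> 'a \<times> 'a \<Rightarrow> real" where
  "stepv g p f v = (1-p) * f v + p * f (act (minv g) v)"

definition avgv :: "('a::{field,finite} \<times> 'a \<Rightarrow> real) \<Rightarrow> 'a \<times> 'a \<Rightarrow> real" where
  "avgv f v = (\<Sum>c\<in>UNIV. f (act (u c) v)) / real CARD('a)"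

lemma sum_if_lin:
  "(\<Sum>x\<in>A. if P x then a * X x + b * Y x else 0)
     = a * (\<Sum>x\<in>A. if P x then X x else 0) + b * (\<Sum>x\<in>A. if P x then Y x else (0::real))"
proof -
  have "(\<Sum>x\<in>A. if P x then a * X x + b * Y x else 0)
      = (\<Sum>x\<in>A. a * (if P x then X x else 0) + b * (if P x then Y x else 0))"
    by (rule sum.cong) auto
  then show ?thesis by (simp add: sum.distrib sum_distrib_left)
qed

lemma nu_stp:
  assumes d: "det (g::'a::{field,finite}^2^2) = 1"
  shows "nu (stp g p D) = stepv g p (nu D)"
proof
  fix v
  have "(\<Sum>C\<in>UNIV. if act C e1 = v then D (minv g ** C) else 0)
      = (\<Sum>A\<in>UNIV. if act (g ** A) e1 = v then D (minv g ** (g ** A)) else 0)"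
    by (rule sum.reindex_bij_witness[of _ "\<lambda>C. g ** C" "\<lambda>A. minv g ** A"])
       (auto simp: minv_cancel1[OF d] minv_cancel2[OF d])
  also have "\<dots> = (\<Sum>A\<in>UNIV. if act A e1 = act (minv g) v then D A else 0)"
    by (rule sum.cong) (auto simp: act_mult act_minv[OF d] act_minv'[OF d] minv_cancel2[OF d])
  finally have "(\<Sum>C\<in>UNIV. if act C e1 = v then D (minv g ** C) else 0) = nu D (act (minv g) v)"
    by (simp add: nu_def)
  then show "nu (stp g p D) v = stepv g p (nu D) v"
    unfolding nu_def stepv_def stp_def sum_if_lin by simp
qed

lemma act_u_u: "(1::'a::field) + 1 = 0 \<Longrightarrow> act (u (c::'a)) (act (u c) v) = v"
  by (metis act_minv det_u minv_u)

lemma sum_if_div: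
  "(\<Sum>x\<in>A. if P x then (\<Sum>y\<in>B. F y x) / q else 0) = (\<Sum>y\<in>B. \<Sum>x\<in>A. if P x then F y x else 0) / (q::real)"
proof -
  have "(\<Sum>x\<in>A. if P x then (\<Sum>y\<in>B. F y x) / q else 0) = (\<Sum>x\<in>A. (\<Sum>y\<in>B. if P x then F y x else 0) / q)"
    by (rule sum.cong) auto
  also have "\<dots> = (\<Sum>x\<in>A. \<Sum>y\<in>B. if P x then F y x else 0) / q" by (simp add: sum_divide_distrib)
  also have "\<dots> = (\<Sum>y\<in>B. \<Sum>x\<in>A. if P x then F y x else 0) / q" by (subst sum.swap) (rule refl)
  finally show ?thesis .
qed

lemma nu_avgL:
  assumes c2: "(1::'a::{field,finite}) + 1 = 0"
  shows "nu (avgL D) = avgv (nu (D::'a^2^2 \<Rightarrow> real))"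
proof
  fix v
  have X: "\<And>c::'a. (\<Sum>C\<in>UNIV. if act C e1 = v then D (u c ** C) else 0)
      = (\<Sum>A\<in>UNIV. if act A e1 = act (u c) v then D A else 0)"
  proof -
    fix c :: 'a
    have "(\<Sum>C\<in>UNIV. if act C e1 = v then D (u c ** C) else 0)
      = (\<Sum>A\<in>UNIV. if act (u c ** A) e1 = v then D (u c ** (u c ** A)) else 0)"
      by (rule sum.reindex_bij_witness[of _ "\<lambda>A. u c ** A" "\<lambda>C. u c ** C"])
         (auto simp: u_u[OF c2])
    also have "\<dots> = (\<Sum>A\<in>UNIV. if act A e1 = act (u c) v then D A else 0)"
      by (rule sum.cong) (auto simp: act_mult act_u_u[OF c2] u_u[OF c2])
    finally show "(\<Sum>C\<in>UNIV. if act C e1 = v then D (u c ** C) else 0)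
      = (\<Sum>A\<in>UNIV. if act A e1 = act (u c) v then D A else 0)" .
  qed
  show "nu (avgL D) v = avgv (nu D) v"
    unfolding nu_def avgv_def avgL_def sum_if_div X ..
qed

lemma nu_delta1: "nu delta1 (v::'a::{field,finite} \<times> 'a) = (if v = e1 then 1 else 0)"
proof -
  have "nu delta1 v = (\<Sum>C\<in>UNIV. if C = (mat 1::'a^2^2) then (if v = e1 then 1 else 0) else (0::real))"
    unfolding nu_def by (rule sum.cong) (auto simp: delta1_def)
  then show ?thesis by simp
qed

lemma coset_iff:
  assumes dA: "det (A::'a::field^2^2) = 1" and dC: "det C = 1"
  shows "(\<exists>c. A = C ** u c) \<longleftrightarrow> act A e1 = act C e1"
proof
  assume "\<exists>c. A = C ** u c"
  then obtain c where "A = C ** u c" by auto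
  then show "act A e1 = act C e1" by (simp add: act_mult act_def e1_def)
next
  assume h: "act A e1 = act C e1"
  define B where "B = minv C ** A"
  have dB: "det B = 1" using dA dC by (simp add: B_def det_mult2)
  have "act B e1 = e1" using h by (simp add: B_def act_mult act_minv[OF dC])
  then have b: "B$1$1 = 1" "B$2$1 = 0" by (auto simp: act_def e1_def)
  then have "B$2$2 = 1" using dB by (simp add: det_2)
  then have "B = u (B$1$2)" using b by (simp add: mat2_eq_iff)
  moreover have "A = C ** B" by (simp add: B_def minv_cancel1[OF dC])
  ultimately show "\<exists>c. A = C ** u c" by metis
qed

lemma final_formula:
  assumes rD: "rinv D" and sD: "SLsupp D" and dC: "det (C::'a::{field,finite}^2^2) = 1"
  shows "D C = nu D (act C e1) / real CARD('a)"
proof -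
  have inj: "inj (\<lambda>c. C ** u c)"
  proof (rule injI)
    fix b c assume "C ** u b = C ** u c"
    then have "minv C ** (C ** u b) = minv C ** (C ** u c)" by simp
    then show "b = c" by (simp add: minv_cancel2[OF dC] u_inj)
  qed
  have "(\<Sum>c\<in>UNIV. D (C ** u c)) = (\<Sum>A\<in>range (\<lambda>c. C ** u c). D A)"
    by (simp add: sum.reindex[OF inj])
  also have "\<dots> = (\<Sum>A\<in>{A. act A e1 = act C e1}. D A)"
  proof (rule sum.mono_neutral_cong)
    show "\<And>x. x \<in> {A. act A e1 = act C e1} - range (\<lambda>c. C ** u c) \<Longrightarrow> D x = 0"
      using coset_iff[OF _ dC] sD unfolding SLsupp_def by blast
    show "\<And>x. x \<in> range (\<lambda>c. C ** u c) - {A. act A e1 = act C e1} \<Longrightarrow> D x = 0"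
      using coset_iff[OF _ dC] sD unfolding SLsupp_def by blast
  qed auto
  also have "\<dots> = nu D (act C e1)"
    by (simp add: nu_def sum.inter_filter[symmetric])
  finally have "(\<Sum>c\<in>UNIV. D (C ** u c)) = nu D (act C e1)" .
  moreover have "(\<Sum>c\<in>(UNIV::'a set). D (C ** u c)) = real CARD('a) * D C"
    using rD by (simp add: rinv_def)
  ultimately show ?thesis by (simp add: field_simps)
qed

(* ---- from P4.thy ---- *)
definition w :: "'a::field^2^2" where "w = mk 0 1 1 0"
definition dg :: "'a::field \<Rightarrow> 'a^2^2" where "dg s = mk s 0 0 (inverse s)"

lemma det_w: "(1::'a::field)+1 = 0 \<Longrightarrow> det (w::'a^2^2) = 1"
  by (simp add: w_def det_2 c2_neg[of "1::'a"])
lemma det_dg: "s \<noteq> 0 \<Longrightarrow> det (dg s) = 1" by (simp add: dg_def det_2)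
lemma act_minv_w: "(1::'a::field)+1 = 0 \<Longrightarrow> act (minv w) (x::'a,y) = (y,x)"
  by (simp add: w_def minv_def act_def c2_neg)
lemma act_minv_dg: "act (minv (dg s)) (x,y) = (inverse s * x, s * y)"
  by (simp add: dg_def minv_def act_def)
lemma act_u: "act (u c) (x,y) = (x + c * y, y)"
  by (simp add: act_def)

definition mkf :: "('a::field \<Rightarrow> real) \<Rightarrow> ('a \<Rightarrow> real) \<Rightarrow> 'a \<times> 'a \<Rightarrow> real" where
  "mkf g h v = (if snd v \<noteq> 0 then g (snd v) else if fst v \<noteq> 0 then h (fst v) else 0)"

definition Wst :: "real \<Rightarrow> ('a::{field,finite} \<Rightarrow> real) \<times> ('a \<Rightarrow> real) \<Rightarrow> ('a \<Rightarrow> real) \<times> ('a \<Rightarrow> real)" where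
  "Wst p st = ((\<lambda>y. (1-p) * fst st y + p / real CARD('a) * (snd st y + (\<Sum>z\<in>UNIV-{0}. fst st z))),
                (\<lambda>x. (1-p) * snd st x + p * fst st x))"

definition Dst :: "'a::field \<Rightarrow> real \<Rightarrow> ('a \<Rightarrow> real) \<times> ('a \<Rightarrow> real) \<Rightarrow> ('a \<Rightarrow> real) \<times> ('a \<Rightarrow> real)" where
  "Dst s p st = ((\<lambda>y. (1-p) * fst st y + p * fst st (s * y)),
                (\<lambda>x. (1-p) * snd st x + p * snd st (inverse s * x)))"

lemma mkf_snd: "y \<noteq> 0 \<Longrightarrow> mkf g h (a, y) = g y" by (simp add: mkf_def)
lemma mkf_fst: "x \<noteq> 0 \<Longrightarrow> mkf g h (x, 0) = h x" by (simp add: mkf_def)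
lemma mkf_00: "mkf g h (0, 0) = 0" by (simp add: mkf_def)

lemma sum_pairs: "(\<Sum>v\<in>UNIV. F (v::'a::finite\<times>'b::finite)) = (\<Sum>y\<in>UNIV. \<Sum>x\<in>UNIV. F (x,y))"
proof -
  have "(\<Sum>v\<in>UNIV. F v) = (\<Sum>v\<in>UNIV\<times>UNIV. F v)" by simp
  also have "\<dots> = (\<Sum>x\<in>UNIV. \<Sum>y\<in>UNIV. F (x,y))" by (simp add: sum.cartesian_product case_prod_unfold)
  also have "\<dots> = (\<Sum>y\<in>UNIV. \<Sum>x\<in>UNIV. F (x,y))" by (rule sum.swap)
  finally show ?thesis .
qed

lemma sum_mkf_row:
  assumes "y \<noteq> 0"
  shows "(\<Sum>z\<in>UNIV. mkf g h (y, z::'a::{field,finite})) = h y + (\<Sum>z\<in>UNIV-{0}. g z)"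
proof -
  have "(\<Sum>z\<in>UNIV. mkf g h (y, z)) = mkf g h (y, 0) + (\<Sum>z\<in>UNIV-{0}. mkf g h (y, z))"
    by (rule sum.remove) auto
  also have "(\<Sum>z\<in>UNIV-{0}. mkf g h (y, z)) = (\<Sum>z\<in>UNIV-{0}. g z)"
    by (rule sum.cong) (auto simp: mkf_def)
  finally show ?thesis using assms by (simp add: mkf_def)
qed

lemma avg_W:
  assumes c2: "(1::'a::{field,finite}) + 1 = 0"
  shows "avgv (stepv w p (mkf g h)) = mkf (fst (Wst p (g,h))) (snd (Wst p (g::'a \<Rightarrow> real,h)))"
proof
  fix v :: "'a \<times> 'a"
  obtain x y where v: "v = (x,y)" by (cases v)
  have q0: "real CARD('a) \<noteq> 0" by simp
  have F: "stepv w p (mkf g h) (a, b) = (1-p) * mkf g h (a,b) + p * mkf g h (b,a)" for a b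
    by (simp add: stepv_def act_minv_w[OF c2])
  show "avgv (stepv w p (mkf g h)) v = mkf (fst (Wst p (g,h))) (snd (Wst p (g,h))) v"
  proof (cases "y = 0")
    case False
    have re: "(\<Sum>c\<in>UNIV. mkf g h (y, x + c * y)) = (\<Sum>z\<in>UNIV. mkf g h (y, z))"
      by (rule sum.reindex_bij_witness[of _ "\<lambda>z. (z - x) / y" "\<lambda>c. x + c * y"])
         (use False in \<open>auto simp: field_simps\<close>)
    have "(\<Sum>c\<in>UNIV. stepv w p (mkf g h) (act (u c) v))
        = (\<Sum>c\<in>(UNIV::'a set). (1-p) * g y + p * mkf g h (y, x + c * y))"
      by (rule sum.cong) (use False in \<open>simp_all add: v act_u F mkf_snd\<close>)
    also have "\<dots> = (\<Sum>c\<in>(UNIV::'a set). (1-p) * g y) + p * (\<Sum>c\<in>UNIV. mkf g h (y, x + c * y))"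
      by (simp only: sum.distrib sum_distrib_left)
    also have "\<dots> = real CARD('a) * ((1-p) * g y) + p * (h y + (\<Sum>z\<in>UNIV-{0}. g z))"
      by (simp only: re sum_mkf_row[OF False]) simp
    finally show ?thesis using False q0
      by (simp add: avgv_def Wst_def mkf_def v field_simps)
  next
    case True
    have "(\<Sum>c\<in>UNIV. stepv w p (mkf g h) (act (u c) v))
        = (\<Sum>c\<in>(UNIV::'a set). stepv w p (mkf g h) (x, 0))"
      by (rule sum.cong) (auto simp: v True act_u)
    also have "\<dots> = real CARD('a) * ((1-p) * mkf g h (x,0) + p * mkf g h (0,x))"
      by (simp add: F)
    finally have "avgv (stepv w p (mkf g h)) v = (1-p) * mkf g h (x,0) + p * mkf g h (0,x)"
      unfolding avgv_def using q0 by simp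
    then show ?thesis using True by (simp add: Wst_def mkf_def v)
  qed
qed

lemma step_D:
  assumes s: "s \<noteq> 0"
  shows "stepv (dg s) p (mkf g h) = mkf (fst (Dst s p (g,h))) (snd (Dst s p (g::'a::field \<Rightarrow> real,h)))"
proof
  fix v :: "'a \<times> 'a"
  obtain x y where v: "v = (x,y)" by (cases v)
  show "stepv (dg s) p (mkf g h) v = mkf (fst (Dst s p (g,h))) (snd (Dst s p (g,h))) v"
    using s by (simp add: v stepv_def act_minv_dg mkf_def Dst_def)
qed

lemma mkf_init: "nu (avgL (delta1::'a::{field,finite}^2^2 \<Rightarrow> real)) = mkf (\<lambda>_. 0) (\<lambda>x. if x = 1 then 1 else 0)"
  if c2: "(1::'a) + 1 = 0"
proof
  fix v :: "'a \<times> 'a"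
  obtain x y where v: "v = (x,y)" by (cases v)
  have "nu (avgL (delta1::'a^2^2 \<Rightarrow> real)) v = avgv (nu delta1) v" by (simp add: nu_avgL[OF c2])
  also have "\<dots> = (\<Sum>c\<in>(UNIV::'a set). if (x + c * y, y) = e1 then 1 else 0) / real CARD('a)"
    by (simp add: avgv_def v act_u nu_delta1)
  also have "\<dots> = mkf (\<lambda>_. 0) (\<lambda>x. if x = 1 then 1 else 0) v"
  proof (cases "y = 0")
    case True
    then show ?thesis by (simp add: v mkf_def e1_def)
  next
    case False
    then show ?thesis by (simp add: v mkf_def e1_def)
  qed
  finally show "nu (avgL (delta1::'a^2^2 \<Rightarrow> real)) v = mkf (\<lambda>_. 0) (\<lambda>x. if x = 1 then 1 else 0) v" .
qed

lemma mass_nu: "(\<Sum>v\<in>UNIV. nu D v) = (\<Sum>C\<in>UNIV. D (C::'a::{field,finite}^2^2))"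
  unfolding nu_def by (subst sum.swap) simp

lemma mass_mkf:
  "(\<Sum>v\<in>UNIV. mkf g h (v::'a::{field,finite}\<times>'a)) =
     real CARD('a) * (\<Sum>y\<in>UNIV-{0}. g y) + (\<Sum>x\<in>UNIV-{0}. h x)"
proof -
  have "(\<Sum>v\<in>UNIV. mkf g h (v::'a\<times>'a)) = (\<Sum>y\<in>UNIV. \<Sum>x\<in>UNIV. mkf g h (x,y))"
    by (rule sum_pairs)
  also have "\<dots> = (\<Sum>x\<in>UNIV. mkf g h (x,0)) + (\<Sum>y\<in>UNIV-{0}. \<Sum>x\<in>UNIV. mkf g h (x,y))"
    by (rule sum.remove) auto
  also have "(\<Sum>y\<in>UNIV-{0}. \<Sum>x\<in>UNIV. mkf g h (x,y)) = (\<Sum>y\<in>UNIV-{0}. real CARD('a) * g y)"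
    by (rule sum.cong) (auto simp: mkf_snd)
  also have "(\<Sum>x\<in>UNIV. mkf g h (x,0)) = mkf g h (0,0) + (\<Sum>x\<in>UNIV-{0}. mkf g h (x,0))"
    by (rule sum.remove) auto
  also have "(\<Sum>x\<in>UNIV-{0}. mkf g h (x,0)) = (\<Sum>x\<in>UNIV-{0}. h x)"
    by (rule sum.cong) (auto simp: mkf_fst)
  finally show ?thesis by (simp add: mkf_00 sum_distrib_left)
qed

(* ---- from P5a.thy ---- *)
section \<open>Cyclic generator of the multiplicative group\<close>

definition fring :: "'a::field ring" where
  "fring = \<lparr>carrier = UNIV, monoid.mult = (*), one = 1, zero = 0, add = (+)\<rparr>"

lemma fring_field: "field (fring :: 'a::field ring)"
proof -
  have "\<exists>y. x + y = 0" for x :: 'a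
    using add.right_inverse by blast
  moreover have "x \<noteq> 0 \<Longrightarrow> \<exists>y. x * y = 1" for x :: 'a
    by (rule exI[of _ "inverse x"]) auto
  ultimately show ?thesis
    unfolding fring_def
    by unfold_locales (auto simp: algebra_simps Units_def)
qed

lemma fring_pow: "x [^]\<^bsub>(fring::'a::field ring)\<^esub> (i::nat) = x ^ i"
  by (induct i) (simp_all add: fring_def mult.commute)

lemma exists_gen: "\<exists>g::'a::{field,finite}. g \<noteq> 0 \<and> (\<forall>x. x \<noteq> 0 \<longrightarrow> (\<exists>i::nat. x = g ^ i))"
proof -
  interpret field "fring :: 'a ring" by (rule fring_field)
  have "finite (carrier (fring :: 'a ring))" by simp
  from finite_field_mult_group_has_gen[OF this] obtain a where
    a: "a \<in> carrier (mult_of (fring :: 'a ring))"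
    "carrier (mult_of (fring :: 'a ring)) = {a [^]\<^bsub>fring\<^esub> i |i::nat. i \<in> UNIV}"
    by blast
  have cm: "carrier (mult_of (fring :: 'a ring)) = UNIV - {0}"
    by (simp add: carrier_mult_of fring_def)
  show ?thesis
  proof (intro exI[of _ a] conjI allI impI)
    show "a \<noteq> 0" using a(1) cm by auto
    fix x :: 'a assume "x \<noteq> 0"
    then have "x \<in> {a [^]\<^bsub>fring\<^esub> i |i::nat. i \<in> UNIV}" using a(2) cm by auto
    then show "\<exists>i. x = a ^ i" by (auto simp: fring_pow)
  qed
qed

lemma card_ge2: "CARD('a::{field,finite}) \<ge> 2"
proof -
  have "card {0::'a, 1} \<le> CARD('a)" by (rule card_mono) auto
  then show ?thesis by simp
qed

lemma card_nonzero: "card (UNIV - {0::'a::{field,finite}}) = CARD('a) - 1"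
  by (simp add: card_Diff_singleton)

lemma pow_card1: assumes "(x::'a::{field,finite}) \<noteq> 0" shows "x ^ (CARD('a) - 1) = 1"
proof -
  have "(\<Prod>y\<in>UNIV-{0}. x * y) = (\<Prod>y\<in>UNIV-{0::'a}. y)"
    by (rule prod.reindex_bij_witness[of _ "\<lambda>y. y / x" "\<lambda>y. x * y"]) (use assms in auto)
  moreover have "(\<Prod>y\<in>UNIV-{0}. x * y) = x ^ (CARD('a) - 1) * (\<Prod>y\<in>UNIV-{0::'a}. y)"
    by (simp add: prod.distrib card_nonzero)
  moreover have "(\<Prod>y\<in>UNIV-{0::'a}. y) \<noteq> 0" by simp
  ultimately show ?thesis by simp
qed

lemma gen_bij:
  assumes g: "g \<noteq> 0" "\<forall>x. x \<noteq> 0 \<longrightarrow> (\<exists>i::nat. x = g ^ i)"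
  shows "bij_betw (\<lambda>k. g ^ k) {..<CARD('a::{field,finite}) - 1} (UNIV - {0::'a})"
proof -
  let ?m = "CARD('a) - 1"
  have gm: "g ^ ?m = 1" using pow_card1[OF g(1)] .
  have img: "(\<lambda>k. g ^ k) ` {..<?m} = UNIV - {0}"
  proof
    show "(\<lambda>k. g ^ k) ` {..<?m} \<subseteq> UNIV - {0}" using g(1) by auto
    show "UNIV - {0} \<subseteq> (\<lambda>k. g ^ k) ` {..<?m}"
    proof
      fix x assume "x \<in> UNIV - {0::'a}"
      then obtain i where i: "x = g ^ i" using g(2) by auto
      have "g ^ i = g ^ (?m * (i div ?m) + i mod ?m)" by simp
      also have "\<dots> = (g ^ ?m) ^ (i div ?m) * g ^ (i mod ?m)" by (simp only: power_add power_mult)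
      finally have "g ^ i = (g ^ ?m) ^ (i div ?m) * g ^ (i mod ?m)" .
      then have "x = g ^ (i mod ?m)" using i gm by simp
      moreover have "i mod ?m < ?m" using card_ge2[where 'a='a] by simp
      ultimately show "x \<in> (\<lambda>k. g ^ k) ` {..<?m}" by auto
    qed
  qed
  have c: "card ((\<lambda>k. g ^ k) ` {..<?m}) = card {..<?m}" by (simp only: img card_nonzero card_lessThan)
  have "inj_on (\<lambda>k. g ^ k) {..<?m}"
    by (rule eq_card_imp_inj_on[OF _ c]) simp
  then show ?thesis using img by (simp add: bij_betw_def)
qed

(* ---- from P5b.thy ---- *)
section \<open>Characters and Fourier transform on the multiplicative group\<close>

locale fgen =
  fixes gam :: "'a::{field,finite}" and mm :: nat
  assumes mm_def: "mm = CARD('a) - 1"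
    and gam_nz: "gam \<noteq> 0"
    and gen: "bij_betw (\<lambda>k. gam ^ k) {..<mm} (UNIV - {0})"
begin


lemma mm_pos: "mm > 0" using card_ge2[where 'a='a] by (simp add: mm_def)

definition idx :: "'a \<Rightarrow> nat" where "idx x = the_inv_into {..<mm} (\<lambda>k. gam ^ k) x"

lemma gen_inj: "inj_on (\<lambda>k. gam ^ k) {..<mm}" using gen by (simp add: bij_betw_def)
lemma gen_img: "(\<lambda>k. gam ^ k) ` {..<mm} = UNIV - {0}" using gen by (simp add: bij_betw_def)

lemma idx_props: "x \<noteq> 0 \<Longrightarrow> idx x < mm \<and> gam ^ idx x = x"
proof -
  assume x: "x \<noteq> 0"
  then have xi: "x \<in> (\<lambda>k. gam ^ k) ` {..<mm}" using gen_img by auto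
  have "idx x \<in> {..<mm}" unfolding idx_def by (rule the_inv_into_into[OF gen_inj xi]) simp
  moreover have "gam ^ idx x = x" unfolding idx_def using f_the_inv_into_f[OF gen_inj xi] .
  ultimately show ?thesis by simp
qed

lemma idx_pow: "k < mm \<Longrightarrow> idx (gam ^ k) = k"
  unfolding idx_def using gen by (auto simp: bij_betw_def the_inv_into_f_f)

lemma gam_mm: "gam ^ mm = 1" using pow_card1[OF gam_nz] by (simp add: mm_def)

lemma gam_mod: "gam ^ (k mod mm) = gam ^ k"
proof -
  have "gam ^ k = gam ^ (mm * (k div mm) + k mod mm)" by simp
  also have "\<dots> = (gam ^ mm) ^ (k div mm) * gam ^ (k mod mm)" by (simp only: power_add power_mult)
  also have "\<dots> = gam ^ (k mod mm)" by (simp add: gam_mm)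
  finally show ?thesis by simp
qed

lemma idx_mult: "x \<noteq> 0 \<Longrightarrow> y \<noteq> 0 \<Longrightarrow> idx (x * y) = (idx x + idx y) mod mm"
proof -
  assume x: "x \<noteq> 0" and y: "y \<noteq> 0"
  have "gam ^ ((idx x + idx y) mod mm) = gam ^ (idx x + idx y)" by (rule gam_mod)
  also have "\<dots> = gam ^ idx x * gam ^ idx y" by (rule power_add)
  also have "\<dots> = x * y" using idx_props[OF x] idx_props[OF y] by simp
  finally have "gam ^ ((idx x + idx y) mod mm) = x * y" .
  then have "idx (x * y) = idx (gam ^ ((idx x + idx y) mod mm))" by simp
  also have "\<dots> = (idx x + idx y) mod mm" using mm_pos by (simp add: idx_pow)
  finally show ?thesis .
qed

lemma idx_one: "idx 1 = 0" using idx_pow[of 0] mm_pos by simp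

definition zeta :: complex where "zeta = cis (2 * pi / real mm)"

lemma zeta_pow: "zeta ^ k = cis (real k * (2 * pi / real mm))"
  by (simp add: zeta_def DeMoivre)

lemma zeta_mm: "zeta ^ mm = 1"
proof -
  have "real mm * (2 * pi / real mm) = 2 * pi * real_of_int 1" using mm_pos by simp
  then have "zeta ^ mm = cis (2 * pi * real_of_int 1)" by (simp only: zeta_pow)
  then show ?thesis by simp
qed

lemma zeta_mod: "zeta ^ (k mod mm) = zeta ^ k"
proof -
  have "zeta ^ k = zeta ^ (mm * (k div mm) + k mod mm)" by simp
  also have "\<dots> = (zeta ^ mm) ^ (k div mm) * zeta ^ (k mod mm)" by (simp only: power_add power_mult)
  also have "\<dots> = zeta ^ (k mod mm)" by (simp add: zeta_mm)
  finally show ?thesis by simp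
qed

lemma zeta_ne1: assumes "0 < k" "k < mm" shows "zeta ^ k \<noteq> 1"
proof
  assume "zeta ^ k = 1"
  then have "Re (zeta ^ k) = 1" by simp
  then have "cos (real k * (2 * pi / real mm)) = 1" by (simp only: zeta_pow cis.sel(1))
  then obtain n :: int where n: "real k * (2 * pi / real mm) = real_of_int n * 2 * pi"
    using cos_one_2pi_int by blast
  have mp: "real mm > 0" using mm_pos by simp
  have "real k * (2 * pi) = (real_of_int n * real mm) * (2 * pi)"
    using n mp by (simp add: field_simps)
  then have "real k = real_of_int n * real mm" by simp
  then have kn: "int k = n * int mm" by (metis of_int_eq_iff of_int_mult of_int_of_nat_eq)
  show False
  proof (cases "n \<le> 0")
    case True
    then have "n * int mm \<le> 0" by (simp add: mult_nonpos_nonneg)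
    then show False using kn assms by simp
  next
    case False
    then have "1 * int mm \<le> n * int mm" by (intro mult_right_mono) auto
    then have "int mm \<le> int k" using kn by simp
    then show False using assms by simp
  qed
qed

lemma norm_zeta_pow[simp]: "norm (zeta ^ k) = 1" by (simp add: zeta_pow)

definition chi :: "nat \<Rightarrow> 'a \<Rightarrow> complex" where "chi j x = zeta ^ (j * idx x)"

lemma norm_chi[simp]: "norm (chi j x) = 1" by (simp add: chi_def)

lemma chi_mult: "x \<noteq> 0 \<Longrightarrow> y \<noteq> 0 \<Longrightarrow> chi j (x * y) = chi j x * chi j y"
proof -
  assume x: "x \<noteq> 0" and y: "y \<noteq> 0"
  have "chi j (x * y) = zeta ^ ((j * ((idx x + idx y) mod mm)) mod mm)"
    by (simp add: chi_def idx_mult[OF x y] zeta_mod)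
  also have "\<dots> = zeta ^ (j * (idx x + idx y))"
    by (simp add: mod_mult_right_eq zeta_mod)
  finally show ?thesis by (simp add: chi_def algebra_simps power_add)
qed

lemma chi_one[simp]: "chi j 1 = 1" by (simp add: chi_def idx_one)
lemma chi_zero_freq[simp]: "chi 0 x = 1" by (simp add: chi_def)

lemma chi_inverse: assumes x: "x \<noteq> 0" shows "chi j (inverse x) = cnj (chi j x)"
proof -
  have a: "chi j (inverse x) * chi j x = 1"
    using chi_mult[of "inverse x" x j] x by simp
  have b: "chi j x * cnj (chi j x) = 1"
    by (simp add: complex_norm_square[symmetric])
  have "chi j (inverse x) = chi j (inverse x) * (chi j x * cnj (chi j x))" by (simp only: b) simp
  also have "\<dots> = (chi j (inverse x) * chi j x) * cnj (chi j x)" by (simp only: mult.assoc)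
  also have "\<dots> = cnj (chi j x)" by (simp only: a) simp
  finally show ?thesis .
qed

lemma sum_nonzero_reindex: "(\<Sum>x\<in>UNIV-{0}. f x) = (\<Sum>k<mm. f (gam ^ k))"
  using sum.reindex_bij_betw[OF gen, of f] by simp

lemma zeta_pow_pow: "(zeta ^ a) ^ mm = 1"
proof -
  have "(zeta ^ a) ^ mm = (zeta ^ mm) ^ a" by (simp only: power_mult[symmetric] mult.commute)
  then show ?thesis by (simp add: zeta_mm)
qed

lemma geom_zero: "z \<noteq> 1 \<Longrightarrow> z ^ mm = 1 \<Longrightarrow> (\<Sum>k<mm. z ^ k) = (0::complex)"
  by (simp add: sum_gp_strict)

lemma sum_chi: assumes "0 < j" "j < mm" shows "(\<Sum>x\<in>UNIV-{0}. chi j x) = 0"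
proof -
  have "(\<Sum>x\<in>UNIV-{0}. chi j x) = (\<Sum>k<mm. chi j (gam ^ k))" by (rule sum_nonzero_reindex)
  also have "\<dots> = (\<Sum>k<mm. (zeta ^ j) ^ k)"
    by (rule sum.cong) (simp_all add: chi_def idx_pow power_mult)
  also have "\<dots> = 0"
    by (rule geom_zero) (use zeta_ne1 assms zeta_pow_pow in auto)
  finally show ?thesis .
qed

lemma sum_chi_freq: assumes x: "x \<noteq> 0" shows "(\<Sum>j<mm. chi j x) = (if x = 1 then of_nat mm else 0)"
proof (cases "x = 1")
  case True then show ?thesis by simp
next
  case False
  have i: "idx x < mm" "gam ^ idx x = x" using idx_props[OF x] by auto
  have "idx x \<noteq> 0"
  proof
    assume "idx x = 0" then have "x = 1" using i by (metis power_0)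
    with False show False by simp
  qed
  then have ne: "zeta ^ idx x \<noteq> 1" using zeta_ne1 i by simp
  have "(\<Sum>j<mm. chi j x) = (\<Sum>j<mm. (zeta ^ idx x) ^ j)"
    by (rule sum.cong) (simp_all add: chi_def power_mult[symmetric] mult.commute)
  also have "\<dots> = 0" by (rule geom_zero[OF ne zeta_pow_pow])
  finally show ?thesis using False by simp
qed

definition FT :: "('a \<Rightarrow> real) \<Rightarrow> nat \<Rightarrow> complex" where
  "FT f j = (\<Sum>x\<in>UNIV-{0}. of_real (f x) * chi j x)"

lemma FT_lin: "FT (\<lambda>y. a * f y + b * g y) j = of_real a * FT f j + of_real b * FT g j"
  by (simp add: FT_def sum.distrib sum_distrib_left algebra_simps)

lemma FT_const: "0 < j \<Longrightarrow> j < mm \<Longrightarrow> FT (\<lambda>y. c) j = 0"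
  by (simp add: FT_def sum_distrib_left[symmetric] sum_chi)

lemma inv_cancel: "s \<noteq> 0 \<Longrightarrow> inverse s * (s * y) = (y::'a)" "s \<noteq> 0 \<Longrightarrow> s * (inverse s * y) = (y::'a)"
  by (simp_all add: mult.assoc[symmetric])

lemma FT_shift: assumes s: "s \<noteq> 0" shows "FT (\<lambda>y. f (s * y)) j = cnj (chi j s) * FT f j"
proof -
  have "FT (\<lambda>y. f (s * y)) j = (\<Sum>z\<in>UNIV-{0}. of_real (f z) * chi j (inverse s * z))"
    unfolding FT_def
    by (rule sum.reindex_bij_witness[of _ "\<lambda>z. inverse s * z" "\<lambda>y. s * y"]) (use s in \<open>auto simp: inv_cancel\<close>)
  also have "\<dots> = (\<Sum>z\<in>UNIV-{0}. cnj (chi j s) * (of_real (f z) * chi j z))"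
  proof (rule sum.cong)
    fix z assume "z \<in> UNIV - {0::'a}"
    then have "chi j (inverse s * z) = cnj (chi j s) * chi j z" using s by (simp add: chi_mult chi_inverse)
    then show "of_real (f z) * chi j (inverse s * z) = cnj (chi j s) * (of_real (f z) * chi j z)"
      by (simp only: mult.left_commute)
  qed simp
  finally show ?thesis by (simp add: FT_def sum_distrib_left)
qed

lemma FT_shift': assumes s: "s \<noteq> 0" shows "FT (\<lambda>x. f (inverse s * x)) j = chi j s * FT f j"
proof -
  have "FT (\<lambda>x. f (inverse s * x)) j = (\<Sum>z\<in>UNIV-{0}. of_real (f z) * chi j (s * z))"
    unfolding FT_def
    by (rule sum.reindex_bij_witness[of _ "\<lambda>z. s * z" "\<lambda>y. inverse s * y"]) (use s in \<open>auto simp: inv_cancel\<close>)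
  also have "\<dots> = (\<Sum>z\<in>UNIV-{0}. chi j s * (of_real (f z) * chi j z))"
  proof (rule sum.cong)
    fix z assume "z \<in> UNIV - {0::'a}"
    then have "chi j (s * z) = chi j s * chi j z" using s by (simp add: chi_mult)
    then show "of_real (f z) * chi j (s * z) = chi j s * (of_real (f z) * chi j z)"
      by (simp only: mult.left_commute)
  qed simp
  finally show ?thesis by (simp add: FT_def sum_distrib_left)
qed

lemma FT_inversion:
  assumes t: "t \<noteq> 0"
  shows "(\<Sum>j<mm. FT f j * chi j (inverse t)) = of_nat mm * of_real (f t)"
proof -
  have "(\<Sum>j<mm. FT f j * chi j (inverse t))
      = (\<Sum>j<mm. \<Sum>x\<in>UNIV-{0}. of_real (f x) * chi j (x * inverse t))"
  proof (rule sum.cong)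
    fix j
    show "FT f j * chi j (inverse t) = (\<Sum>x\<in>UNIV-{0}. of_real (f x) * chi j (x * inverse t))"
      unfolding FT_def sum_distrib_right
    proof (rule sum.cong)
      fix x assume "x \<in> UNIV - {0::'a}"
      then have "chi j (x * inverse t) = chi j x * chi j (inverse t)" using t by (simp add: chi_mult)
      then show "of_real (f x) * chi j x * chi j (inverse t) = of_real (f x) * chi j (x * inverse t)"
        by (simp only: mult.assoc)
    qed simp
  qed simp
  also have "\<dots> = (\<Sum>x\<in>UNIV-{0}. \<Sum>j<mm. of_real (f x) * chi j (x * inverse t))"
    by (rule sum.swap)
  also have "\<dots> = (\<Sum>x\<in>UNIV-{0}. of_real (f x) * (\<Sum>j<mm. chi j (x * inverse t)))"
    by (simp only: sum_distrib_left)
  also have "\<dots> = (\<Sum>x\<in>UNIV-{0}. if x = t then of_nat mm * of_real (f t) else 0)"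
  proof (rule sum.cong)
    fix x assume x: "x \<in> UNIV - {0::'a}"
    have nz: "x * inverse t \<noteq> 0" using x t by simp
    have eq: "(x * inverse t = 1) = (x = t)" using t by (auto simp: field_simps)
    show "of_real (f x) * (\<Sum>j<mm. chi j (x * inverse t)) = (if x = t then of_nat mm * of_real (f t) else 0)"
      by (simp add: sum_chi_freq[OF nz] eq)
  qed simp
  also have "\<dots> = of_nat mm * of_real (f t)" using t by simp
  finally show ?thesis .
qed

lemma FT_const_fun:
  assumes z: "\<And>j. 0 < j \<Longrightarrow> j < mm \<Longrightarrow> FT f j = 0" and x: "x \<noteq> 0" and y: "y \<noteq> 0"
  shows "f x = f y"
proof -
  have "\<And>t. t \<noteq> 0 \<Longrightarrow> of_nat mm * of_real (f t) = FT f 0"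
  proof -
    fix t :: 'a assume t: "t \<noteq> 0"
    have "(\<Sum>j<mm. FT f j * chi j (inverse t)) = FT f 0 * chi 0 (inverse t) + (\<Sum>j\<in>{..<mm}-{0}. FT f j * chi j (inverse t))"
      by (rule sum.remove) (use mm_pos in auto)
    also have "(\<Sum>j\<in>{..<mm}-{0}. FT f j * chi j (inverse t)) = 0"
      by (rule sum.neutral) (use z in auto)
    finally have "(\<Sum>j<mm. FT f j * chi j (inverse t)) = FT f 0" by simp
    then show "of_nat mm * of_real (f t) = FT f 0" using FT_inversion[OF t] by simp
  qed
  then have "of_nat mm * (of_real (f x) :: complex) = of_nat mm * of_real (f y)" using x y by simp
  then show ?thesis using mm_pos by simp
qed

end

(* ---- from P6.thy ---- *)
datatype 'b action = AW real | AD 'b real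

fun stA :: "'a::{field,finite} action \<Rightarrow> ('a \<Rightarrow> real) \<times> ('a \<Rightarrow> real) \<Rightarrow> ('a \<Rightarrow> real) \<times> ('a \<Rightarrow> real)" where
  "stA (AW p) st = Wst p st"
| "stA (AD s p) st = Dst s p st"

fun toL :: "'a::field list \<Rightarrow> 'a action \<Rightarrow> (('a^2^2) \<times> real) list" where
  "toL bs (AW p) = LUof bs @ [(w, p)]"
| "toL bs (AD s p) = [(dg s, p)]"

fun validA :: "'a::field action \<Rightarrow> bool" where
  "validA (AW p) = (0 \<le> p \<and> p \<le> 1)"
| "validA (AD s p) = (s \<noteq> 0 \<and> 0 \<le> p \<and> p \<le> 1)"

definition st0 :: "('a::field \<Rightarrow> real) \<times> ('a \<Rightarrow> real)" where
  "st0 = ((\<lambda>_. 0), (\<lambda>x. if x = 1 then 1 else 0))"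

definition Ylist :: "'a::field list \<Rightarrow> 'a action list \<Rightarrow> (('a^2^2) \<times> real) list" where
  "Ylist bs as = concat (map (toL bs) (rev as))"

lemma Ylist_snoc: "Ylist bs (as @ [b]) = toL bs b @ Ylist bs as" by (simp add: Ylist_def)

lemma avg_W':
  assumes c2: "(1::'a::{field,finite}) + 1 = 0"
  shows "avgv (stepv w p (mkf (fst st) (snd st))) = mkf (fst (Wst p st)) (snd (Wst p (st::('a \<Rightarrow> real) \<times> ('a \<Rightarrow> real))))"
  using avg_W[OF c2, of p "fst st" "snd st"] by simp

lemma step_D':
  assumes "s \<noteq> 0"
  shows "stepv (dg s) p (mkf (fst st) (snd st)) = mkf (fst (Dst s p st)) (snd (Dst s p (st::('a::field \<Rightarrow> real) \<times> ('a \<Rightarrow> real))))"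
  using step_D[OF assms, of p "fst st" "snd st"] by simp

lemma opsl_LU_fun:
  assumes c2: "(1::'a::{field,finite}) + 1 = 0" and bs: "set bs = (UNIV::'a set)"
  shows "opsl (LUof bs) D = avgL D"
  by (rule ext) (rule opsl_LU[OF c2 bs])

lemma run_nu:
  assumes c2: "(1::'a::{field,finite}) + 1 = 0" and bs: "set bs = (UNIV::'a set)"
  shows "\<forall>a\<in>set as. validA a \<Longrightarrow>
    nu (opsl (Ylist bs as) (opsl (LUof bs) delta1)) = mkf (fst (fold stA as st0)) (snd (fold stA as (st0::('a \<Rightarrow> real) \<times> ('a \<Rightarrow> real))))"
proof (induct as rule: rev_induct)
  case Nil
  show ?case by (simp add: Ylist_def opsl_LU_fun[OF c2 bs] mkf_init[OF c2] st0_def)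
next
  case (snoc a as)
  let ?X = "opsl (Ylist bs as) (opsl (LUof bs) delta1)"
  have IH: "nu ?X = mkf (fst (fold stA as st0)) (snd (fold stA as st0))" using snoc by auto
  have va: "validA a" using snoc by auto
  show ?case
  proof (cases a)
    case (AW p)
    have "opsl (Ylist bs (as @ [a])) (opsl (LUof bs) delta1) = avgL (stp w p ?X)"
      by (simp add: Ylist_snoc AW opsl_append opsl_LU_fun[OF c2 bs])
    then have "nu (opsl (Ylist bs (as @ [a])) (opsl (LUof bs) delta1)) = avgv (stepv w p (nu ?X))"
      by (simp add: nu_avgL[OF c2] nu_stp[OF det_w[OF c2]])
    then show ?thesis using IH by (simp add: AW avg_W'[OF c2])
  next
    case (AD s p)
    then have s: "s \<noteq> 0" using va by simp
    have "opsl (Ylist bs (as @ [a])) (opsl (LUof bs) delta1) = stp (dg s) p ?X"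
      by (simp add: Ylist_snoc AD opsl_append)
    then have "nu (opsl (Ylist bs (as @ [a])) (opsl (LUof bs) delta1)) = stepv (dg s) p (nu ?X)"
      by (simp add: nu_stp[OF det_dg[OF s]])
    then show ?thesis using IH by (simp add: AD step_D'[OF s])
  qed
qed

lemma list_props:
  assumes c2: "(1::'a::field) + 1 = 0" and v: "\<forall>a\<in>set as. validA a"
  shows "\<forall>x\<in>set (Ylist bs as @ LUof (bs::'a list)). det (fst x) = 1 \<and> 0 \<le> snd x \<and> snd x \<le> 1"
proof -
  have "\<forall>x\<in>set (toL bs a). det (fst x) = 1 \<and> 0 \<le> snd x \<and> snd x \<le> 1" if "validA a" for a
    using that by (cases a) (auto simp: LUof_def det_w[OF c2] det_dg)
  then show ?thesis using v by (auto simp: Ylist_def LUof_def)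
qed

lemma mass_run:
  assumes c2: "(1::'a::{field,finite}) + 1 = 0" and bs: "set bs = (UNIV::'a set)" and v: "\<forall>a\<in>set as. validA a"
  shows "real CARD('a) * (\<Sum>y\<in>UNIV-{0}. fst (fold stA as st0) y) + (\<Sum>x\<in>UNIV-{0}. snd (fold stA as (st0::('a \<Rightarrow> real) \<times> ('a \<Rightarrow> real))) x) = 1"
proof -
  have P: "\<forall>x\<in>set (Ylist bs as @ LUof bs). det (fst x) = 1" using list_props[OF c2 v] by auto
  then have P1: "\<forall>x\<in>set (Ylist bs as). det (fst x) = 1" and P2: "\<forall>x\<in>set (LUof bs). det (fst x) = 1" by auto
  have "(\<Sum>v\<in>UNIV. nu (opsl (Ylist bs as) (opsl (LUof bs) delta1)) v) = 1"
    by (simp add: mass_nu mass_opsl[OF P1] mass_opsl[OF P2] mass_delta1)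
  then show ?thesis by (simp add: run_nu[OF c2 bs v] mass_mkf)
qed

lemma act_e1_nz: "det (C::'a::field^2^2) = 1 \<Longrightarrow> act C e1 \<noteq> (0,0)"
proof
  assume d: "det C = 1" and z: "act C e1 = (0,0)"
  have "act (minv C) (act C e1) = e1" by (rule act_minv[OF d])
  then show False using z by (simp add: act_def e1_def)
qed

lemma final_uniform:
  assumes c2: "(1::'a::{field,finite}) + 1 = 0" and bs: "set bs = (UNIV::'a set)" and v: "\<forall>a\<in>set as. validA a"
    and K: "\<forall>x. x \<noteq> (0,0) \<longrightarrow> mkf (fst (fold stA as st0)) (snd (fold stA as (st0::('a \<Rightarrow> real) \<times> ('a \<Rightarrow> real)))) x = K"
  shows "\<forall>C::'a^2^2. det C = 1 \<longrightarrow> pdist (Ylist bs as @ LUof bs) C = 1 / real (card {C::'a^2^2. det C = 1})"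
proof -
  define D where "D = pdist (Ylist bs as @ LUof bs)"
  have D: "D = opsl (Ylist bs as) (opsl (LUof bs) delta1)" by (simp add: D_def pdist_def opsl_append)
  have P: "\<forall>x\<in>set (Ylist bs as @ LUof bs). det (fst x) = 1" using list_props[OF c2 v] by auto
  then have P1: "\<forall>x\<in>set (Ylist bs as). det (fst x) = 1" and P2: "\<forall>x\<in>set (LUof bs). det (fst x) = 1" by auto
  have rD: "rinv D" unfolding D opsl_LU_fun[OF c2 bs] by (rule rinv_opsl[OF rinv_avgL_delta1[OF c2]])
  have sD: "SLsupp D" unfolding D by (rule SLsupp_opsl[OF SLsupp_opsl[OF SLsupp_delta1 P2] P1])
  have val: "D C = K / real CARD('a)" if "det C = 1" for C
  proof -
    have "D C = nu D (act C e1) / real CARD('a)" by (rule final_formula[OF rD sD that])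
    also have "nu D (act C e1) = K" unfolding D run_nu[OF c2 bs v] using K[rule_format, OF act_e1_nz[OF that]] .
    finally show ?thesis .
  qed
  have "(\<Sum>C\<in>UNIV. D C) = 1" unfolding D by (simp add: mass_opsl[OF P1] mass_opsl[OF P2] mass_delta1)
  moreover have "(\<Sum>C\<in>UNIV. D C) = (\<Sum>C\<in>{C::'a^2^2. det C = 1}. D C)"
    by (rule sum.mono_neutral_right) (use sD in \<open>auto simp: SLsupp_def\<close>)
  moreover have "(\<Sum>C\<in>{C::'a^2^2. det C = 1}. D C) = real (card {C::'a^2^2. det C = 1}) * (K / real CARD('a))"
    by (simp add: val)
  ultimately have eq: "real (card {C::'a^2^2. det C = 1}) * (K / real CARD('a)) = 1" by linarith
  then have cz: "real (card {C::'a^2^2. det C = 1}) \<noteq> 0" by (metis mult_zero_left zero_neq_one)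
  have "K / real CARD('a) = (real (card {C::'a^2^2. det C = 1}) * (K / real CARD('a))) / real (card {C::'a^2^2. det C = 1})"
    using cz by simp
  also have "\<dots> = 1 / real (card {C::'a^2^2. det C = 1})" by (simp only: eq)
  finally have kq: "K / real CARD('a) = 1 / real (card {C::'a^2^2. det C = 1})" .
  show ?thesis
  proof (intro allI impI)
    fix C :: "'a^2^2" assume "det C = 1"
    then have "D C = K / real CARD('a)" by (rule val)
    then show "pdist (Ylist bs as @ LUof bs) C = 1 / real (card {C::'a^2^2. det C = 1})"
      unfolding D_def kq .
  qed
qed

(* ---- from P7.thy ---- *)
context fgen begin

lemma FT_affine:
  assumes "0 < j" "j < mm"
  shows "FT (\<lambda>y. a * f y + b * g y + c) j = of_real a * FT f j + of_real b * FT g j"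
proof -
  have "FT (\<lambda>y. a * f y + b * g y + c) j
      = (\<Sum>x\<in>UNIV-{0}. of_real a * (of_real (f x) * chi j x) + of_real b * (of_real (g x) * chi j x) + of_real c * chi j x)"
    unfolding FT_def by (rule sum.cong) (simp_all add: algebra_simps)
  also have "\<dots> = of_real a * FT f j + of_real b * FT g j + of_real c * (\<Sum>x\<in>UNIV-{0}. chi j x)"
    by (simp add: FT_def sum.distrib sum_distrib_left)
  also have "(\<Sum>x\<in>UNIV-{0}. chi j x) = 0" by (rule sum_chi[OF assms])
  finally show ?thesis by simp
qed

lemma FT_W1:
  assumes "0 < j" "j < mm"
  shows "FT (fst (Wst p st)) j = of_real (1-p) * FT (fst st) j + of_real (p / real CARD('a)) * FT (snd st) j"
proof -
  have "fst (Wst p st) = (\<lambda>y. (1-p) * fst st y + (p / real CARD('a)) * snd st y + p / real CARD('a) * (\<Sum>z\<in>UNIV-{0}. fst st z))"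
    by (simp add: Wst_def fun_eq_iff algebra_simps)
  then show ?thesis by (simp only: FT_affine[OF assms])
qed

lemma FT_W2:
  shows "FT (snd (Wst p st)) j = of_real (1-p) * FT (snd st) j + of_real p * FT (fst st) j"
proof -
  have "snd (Wst p st) = (\<lambda>x. (1-p) * snd st x + p * fst st x)" by (simp add: Wst_def)
  then show ?thesis by (simp only: FT_lin)
qed

lemma FT_D1:
  assumes s: "s \<noteq> 0"
  shows "FT (fst (Dst s p st)) j = (of_real (1-p) + of_real p * cnj (chi j s)) * FT (fst st) j"
proof -
  have "fst (Dst s p st) = (\<lambda>y. (1-p) * fst st y + p * fst st (s * y))" by (simp add: Dst_def)
  then have "FT (fst (Dst s p st)) j = of_real (1-p) * FT (fst st) j + of_real p * (cnj (chi j s) * FT (fst st) j)"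
    by (simp only: FT_lin FT_shift[OF s])
  then show ?thesis by (simp add: algebra_simps)
qed

lemma FT_D2:
  assumes s: "s \<noteq> 0"
  shows "FT (snd (Dst s p st)) j = (of_real (1-p) + of_real p * chi j s) * FT (snd st) j"
proof -
  have "snd (Dst s p st) = (\<lambda>x. (1-p) * snd st x + p * snd st (inverse s * x))" by (simp add: Dst_def)
  then have "FT (snd (Dst s p st)) j = of_real (1-p) * FT (snd st) j + of_real p * (chi j s * FT (snd st) j)"
    by (simp only: FT_lin FT_shift'[OF s])
  then show ?thesis by (simp add: algebra_simps)
qed

definition rq :: real where "rq = sqrt (real CARD('a))"
definition ps :: real where "ps = rq / (1 + rq)"

lemma rq_pos: "rq > 0" by (simp add: rq_def)
lemma rq_sq: "rq * rq = real CARD('a)" by (simp add: rq_def)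
lemma ps_01: "0 \<le> ps" "ps \<le> 1" using rq_pos by (simp_all add: ps_def)
lemma ps_id1: "rq * (1 - ps) = ps"
  using rq_pos by (simp add: ps_def field_simps)
lemma ps_id2: "rq * (ps / real CARD('a)) = 1 - ps"
proof -
  have "rq * (ps / real CARD('a)) = rq * ps / (rq * rq)" by (simp add: rq_sq)
  also have "\<dots> = ps / rq" using rq_pos by simp
  also have "\<dots> = 1 / (1 + rq)" using rq_pos by (simp add: ps_def)
  also have "\<dots> = 1 - ps"
  proof -
    have "1 + rq \<noteq> 0" using rq_pos by simp
    then show ?thesis by (simp add: ps_def field_simps)
  qed
  finally show ?thesis .
qed

definition aligned :: "nat \<Rightarrow> ('a \<Rightarrow> real) \<times> ('a \<Rightarrow> real) \<Rightarrow> bool" where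
  "aligned j st \<longleftrightarrow> FT (snd st) j = of_real rq * FT (fst st) j"

lemma W_aligned:
  assumes j: "0 < j" "j < mm"
  shows "aligned j (Wst ps st)"
proof -
  let ?A = "FT (fst st) j" and ?B = "FT (snd st) j"
  have "of_real rq * FT (fst (Wst ps st)) j = of_real rq * (of_real (1-ps) * ?A + of_real (ps / real CARD('a)) * ?B)"
    by (simp only: FT_W1[OF j])
  also have "\<dots> = of_real (rq * (1 - ps)) * ?A + of_real (rq * (ps / real CARD('a))) * ?B"
    by (simp add: algebra_simps)
  also have "\<dots> = of_real ps * ?A + of_real (1 - ps) * ?B" by (simp only: ps_id1 ps_id2)
  also have "\<dots> = FT (snd (Wst ps st)) j" by (simp add: FT_W2 algebra_simps)
  finally show ?thesis by (simp add: aligned_def)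
qed

lemma link_step:
  assumes j: "0 < j" "j < mm" and s: "s \<noteq> 0" and al: "aligned j st"
  shows "FT (fst (Wst ps (Dst s p st))) j = of_real (2 * (1 - ps) * (1 - p + p * Re (chi j s))) * FT (fst st) j"
proof -
  let ?A = "FT (fst st) j" and ?c = "chi j s"
  have B: "FT (snd st) j = of_real rq * ?A" using al by (simp add: aligned_def)
  have "FT (fst (Wst ps (Dst s p st))) j
     = of_real (1-ps) * ((of_real (1-p) + of_real p * cnj ?c) * ?A)
       + of_real (ps / real CARD('a)) * ((of_real (1-p) + of_real p * ?c) * (of_real rq * ?A))"
    by (simp only: FT_W1[OF j] FT_D1[OF s] FT_D2[OF s] B)
  also have "\<dots> = of_real (1-ps) * ((of_real (1-p) + of_real p * cnj ?c) * ?A)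
       + of_real (rq * (ps / real CARD('a))) * ((of_real (1-p) + of_real p * ?c) * ?A)"
    by (simp add: algebra_simps)
  also have "\<dots> = of_real (1-ps) * (of_real (2 * (1-p)) + of_real p * (?c + cnj ?c)) * ?A"
    by (simp only: ps_id2) (simp add: algebra_simps)
  also have "?c + cnj ?c = of_real (2 * Re ?c)" by (rule complex_add_cnj)
  finally show ?thesis by (simp add: algebra_simps)
qed

definition sk :: "nat \<Rightarrow> 'a" where "sk k = (SOME s. s \<noteq> 0 \<and> Re (chi k s) \<le> 0)"
definition pk :: "nat \<Rightarrow> real" where "pk k = 1 / (1 - Re (chi k (sk k)))"

lemma sk_props: assumes "0 < k" "k < mm" shows "sk k \<noteq> 0 \<and> Re (chi k (sk k)) \<le> 0"
proof -
  have "\<exists>s. s \<noteq> 0 \<and> Re (chi k s) \<le> 0"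
  proof (rule ccontr)
    assume "\<not> ?thesis"
    then have pos: "\<forall>s\<in>UNIV-{0}. Re (chi k s) > 0" by auto
    have ne: "UNIV-{0::'a} \<noteq> {}"
    proof -
      have "(1::'a) \<in> UNIV - {0}" by simp
      then show ?thesis by blast
    qed
    have "(\<Sum>s\<in>UNIV-{0::'a}. Re (chi k s)) > 0"
      by (rule sum_pos[OF _ ne]) (use pos in auto)
    moreover have "(\<Sum>s\<in>UNIV-{0::'a}. Re (chi k s)) = Re (\<Sum>s\<in>UNIV-{0}. chi k s)" by (simp add: Re_sum)
    ultimately show False using sum_chi[OF assms] by simp
  qed
  then show ?thesis unfolding sk_def by (rule someI_ex)
qed

lemma pk_props: assumes "0 < k" "k < mm" shows "0 \<le> pk k" "pk k \<le> 1" "pk k * (1 - Re (chi k (sk k))) = 1"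
  using sk_props[OF assms] by (simp_all add: pk_def)

definition linkf :: "nat list \<Rightarrow> ('a \<Rightarrow> real) \<times> ('a \<Rightarrow> real) \<Rightarrow> ('a \<Rightarrow> real) \<times> ('a \<Rightarrow> real)" where
  "linkf ks st = fold (\<lambda>k st. Wst ps (Dst (sk k) (pk k) st)) ks st"

lemma links_zero:
  assumes j: "0 < j" "j < mm"
  shows "\<forall>k\<in>set ks. 0 < k \<and> k < mm \<Longrightarrow> aligned j st \<Longrightarrow> FT (fst st) j = 0 \<or> j \<in> set ks \<Longrightarrow>
     FT (fst (linkf ks st)) j = 0"
proof (induct ks arbitrary: st)
  case Nil then show ?case by (simp add: linkf_def)
next
  case (Cons k ks)
  have k: "0 < k" "k < mm" using Cons.prems by auto
  let ?st' = "Wst ps (Dst (sk k) (pk k) st)"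
  have al': "aligned j ?st'" by (rule W_aligned[OF j])
  have eq: "FT (fst ?st') j = of_real (2 * (1 - ps) * (1 - pk k + pk k * Re (chi j (sk k)))) * FT (fst st) j"
    by (rule link_step[OF j conjunct1[OF sk_props[OF k]] Cons.prems(2)])
  have "FT (fst ?st') j = 0 \<or> j \<in> set ks"
  proof (cases "j = k")
    case True
    have "1 - pk k + pk k * Re (chi j (sk k)) = 1 - pk k * (1 - Re (chi k (sk k)))"
      using True by (simp add: algebra_simps)
    also have "\<dots> = 0" using pk_props(3)[OF k] by simp
    finally show ?thesis using eq by simp
  next
    case False
    then show ?thesis using Cons.prems(3) eq by auto
  qed
  then have "FT (fst (linkf ks ?st')) j = 0"
    using Cons.hyps[of ?st'] Cons.prems(1) al' by auto
  then show ?case by (simp add: linkf_def)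
qed

lemma links_aligned:
  assumes j: "0 < j" "j < mm"
  shows "aligned j st \<Longrightarrow> aligned j (linkf ks st)"
  by (induct ks arbitrary: st) (simp_all add: linkf_def W_aligned[OF j])

end

(* ---- from P8.thy ---- *)
lemma sum_const_nz:
  assumes "\<forall>x. x \<noteq> 0 \<longrightarrow> f x = c"
  shows "(\<Sum>x\<in>UNIV-{0::'a::{field,finite}}. f x) = (real CARD('a) - 1) * c"
proof -
  have "(\<Sum>x\<in>UNIV-{0::'a}. f x) = (\<Sum>x\<in>UNIV-{0::'a}. c)" by (rule sum.cong) (use assms in auto)
  also have "\<dots> = real (CARD('a) - 1) * c" by (simp add: card_nonzero)
  also have "real (CARD('a) - 1) = real CARD('a) - 1" using card_ge2[where 'a='a] by simp
  finally show ?thesis .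
qed

lemma fold_links:
  "fold stA (concat (map (\<lambda>k. [AD (fgen.sk gam mm k) (fgen.pk gam mm k), AW (fgen.ps TYPE('a))]) ks)) st
     = fold (\<lambda>k st. Wst (fgen.ps TYPE('a)) (Dst (fgen.sk gam mm k) (fgen.pk gam mm k) st)) ks (st::('a::{field,finite} \<Rightarrow> real) \<times> ('a \<Rightarrow> real))"
  by (induct ks arbitrary: st) simp_all

theorem mainTheorem5:
  fixes n :: nat
  assumes "n \<ge> 1" and "CARD('a::{field,finite}) = 2 ^ n"
  shows "mixable (PSL2 :: ('a^2^2) set monoid)"
proof -
  have c2: "(1::'a) + 1 = 0" by (rule char2[OF assms(2)])
  obtain g :: 'a where g: "g \<noteq> 0" "\<forall>x. x \<noteq> 0 \<longrightarrow> (\<exists>i::nat. x = g ^ i)" using exists_gen by blast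
  obtain mm where mm: "mm = CARD('a) - 1" by simp
  interpret F: fgen g mm
    by (rule fgen.intro) (rule mm, rule g(1), unfold mm, rule gen_bij[OF g(1) g(2)])
  obtain bs :: "'a list" where bs: "set bs = UNIV" using finite_list[of "UNIV::'a set"] by auto
  define q where "q = real CARD('a)"
  have q2: "q \<ge> 2" using card_ge2[where 'a='a] by (simp add: q_def)
  define pf where "pf = q / (q + 1)"
  define ks where "ks = [1..<mm]"
  define LK where "LK = concat (map (\<lambda>k. [AD (F.sk k) (F.pk k), AW F.ps]) ks)"
  define as1 where "as1 = [AW F.ps] @ LK"
  define as where "as = as1 @ [AW pf]"
  have ks_range: "\<forall>k\<in>set ks. 0 < k \<and> k < mm" by (simp add: ks_def)
  have v1: "\<forall>a\<in>set as1. validA a"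
    using ks_range F.sk_props F.pk_props F.ps_01 by (auto simp: as1_def LK_def)
  have v: "\<forall>a\<in>set as. validA a"
    using v1 q2 by (simp add: as_def pf_def)
  define st1 where "st1 = fold stA as1 st0"
  have st1: "st1 = F.linkf ks (Wst F.ps st0)"
    unfolding st1_def as1_def LK_def F.linkf_def by (simp add: fold_links)
  have stf: "fold stA as st0 = Wst pf st1" by (simp add: as_def st1_def)
  define gf where "gf = fst (Wst pf st1)"
  define hf where "hf = snd (Wst pf st1)"
  have FTz: "F.FT gf j = 0 \<and> F.FT hf j = 0" if j: "0 < j" "j < mm" for j
  proof -
    have al0: "F.aligned j (Wst F.ps st0)" by (rule F.W_aligned[OF j])
    have A: "F.FT (fst st1) j = 0"
      unfolding st1 by (rule F.links_zero[OF j ks_range al0]) (use j in \<open>simp add: ks_def\<close>)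
    have "F.aligned j st1" unfolding st1 by (rule F.links_aligned[OF j al0])
    then have B: "F.FT (snd st1) j = 0" using A by (simp add: F.aligned_def)
    show ?thesis unfolding gf_def hf_def using A B by (simp add: F.FT_W1[OF j] F.FT_W2)
  qed
  have gc: "\<forall>x. x \<noteq> 0 \<longrightarrow> gf x = gf 1"
  proof (intro allI impI)
    fix x :: 'a assume x: "x \<noteq> 0"
    show "gf x = gf 1" by (rule F.FT_const_fun[of gf x 1]) (use FTz x in auto)
  qed
  have hc: "\<forall>x. x \<noteq> 0 \<longrightarrow> hf x = hf 1"
  proof (intro allI impI)
    fix x :: 'a assume x: "x \<noteq> 0"
    show "hf x = hf 1" by (rule F.FT_const_fun[of hf x 1]) (use FTz x in auto)
  qed
  have m1: "q * (\<Sum>y\<in>UNIV-{0}. fst st1 y) + (\<Sum>x\<in>UNIV-{0}. snd st1 x) = 1"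
    using mass_run[OF c2 bs v1] by (simp add: st1_def q_def)
  have mf: "q * (\<Sum>y\<in>UNIV-{0}. gf y) + (\<Sum>x\<in>UNIV-{0}. hf x) = 1"
    using mass_run[OF c2 bs v] by (simp add: stf gf_def hf_def q_def)
  have "(\<Sum>x\<in>UNIV-{0}. hf x) = (1 - pf) * (\<Sum>x\<in>UNIV-{0}. snd st1 x) + pf * (\<Sum>y\<in>UNIV-{0}. fst st1 y)"
    by (simp add: hf_def Wst_def sum.distrib sum_distrib_left)
  also have "\<dots> = 1 / (q + 1)"
  proof -
    have e1: "(1 - pf) = 1 / (q + 1)" using q2 by (simp add: pf_def field_simps)
    have q1: "q + 1 \<noteq> 0" using q2 by simp
    have gen: "1 / (q + 1) * H + q / (q + 1) * G = (H + q * G) / (q + 1)" for H G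
      by (simp add: add_divide_distrib)
    show ?thesis unfolding e1 unfolding pf_def gen using m1 by simp
  qed
  finally have Hf: "(\<Sum>x\<in>UNIV-{0}. hf x) = 1 / (q + 1)" .
  have Hf2: "(\<Sum>x\<in>UNIV-{0}. hf x) = (q - 1) * hf 1" using sum_const_nz[OF hc] by (simp add: q_def)
  have Gf2: "(\<Sum>x\<in>UNIV-{0}. gf x) = (q - 1) * gf 1" using sum_const_nz[OF gc] by (simp add: q_def)
  define K where "K = 1 / ((q + 1) * (q - 1))"
  have q1ne: "q - 1 \<noteq> 0" "q \<noteq> 0" "q + 1 \<noteq> 0" using q2 by auto
  have solve: "x = K" if "(q - 1) * x = 1 / (q + 1)" for x
  proof -
    have "x = ((q - 1) * x) / (q - 1)" using q1ne by simp
    also have "\<dots> = (1 / (q + 1)) / (q - 1)" by (simp only: that)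
    also have "\<dots> = K" by (simp add: K_def)
    finally show ?thesis .
  qed
  have hK: "hf 1 = K" by (rule solve) (use Hf Hf2 in simp)
  have gK: "gf 1 = K"
  proof (rule solve)
    have e: "q * ((q - 1) * gf 1) = 1 - 1 / (q + 1)" using mf Gf2 Hf by simp
    have "1 - 1 / (q + 1) = q * (1 / (q + 1))" using q1ne by (simp add: field_simps)
    then have "q * ((q - 1) * gf 1) = q * (1 / (q + 1))" using e by simp
    then show "(q - 1) * gf 1 = 1 / (q + 1)" by (simp only: mult_left_cancel[OF q1ne(2)])
  qed
  have K: "\<forall>x. x \<noteq> (0,0) \<longrightarrow> mkf (fst (fold stA as st0)) (snd (fold stA as (st0::('a \<Rightarrow> real) \<times> ('a \<Rightarrow> real)))) x = K"
  proof (intro allI impI)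
    fix x :: "'a \<times> 'a" assume x: "x \<noteq> (0,0)"
    show "mkf (fst (fold stA as st0)) (snd (fold stA as st0)) x = K"
      using x gc hc gK hK unfolding stf gf_def[symmetric] hf_def[symmetric]
      by (cases x) (auto simp: mkf_def)
  qed
  show ?thesis
    by (rule mixable_from_dist[OF c2 _ _ final_uniform[OF c2 bs v K]])
       (use list_props[OF c2 v, of bs] in auto)
qed

end
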